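(* Let $M(C,\bar\xi,\pi)$ be a Myller configuration with Darboux frame $(\bar\xi,\bar\mu,\bar v)$ and invariants $G,K,T$, $(G,K)\neq(0,0)$ everywhere, and suppose $C$ is a $W_n$-helix with fixed unit axis $\bar l_n$ and constant angle $\varphi$, $\langle\bar W_n,\bar l_n\rangle=\cos\varphi$. Then, for one choice of sign, $$\bar l_n=\mp(\sin\varphi)\bar\xi+\cos\varphi\left(\frac{-K}{\sqrt{G^2+K^2}}\bar\mu+\frac{G}{\sqrt{G^2+K^2}}\bar v\right).$$
   Context: Let $C$ be a smooth curve in $E^3$ parametrized by arclength $s$; primes denote $d/ds$. A Myller configuration $M(C,\bar\xi,\pi)$ consists of a smooth unit vector field $\bar\xi$ along $C$ and a smooth oriented plane field $\pi$ with $\bar\xi\in\pi$; $\bar v$ is the unit normal of $\pi$, $\bar\mu=\bar v\times\bar\xi$, and $\bar\xi'=G\bar\mu+K\bar v$, $\bar\mu'=-G\bar\xi+T\bar v$, $\bar v'=-K\bar\xi-T\bar\mu$. The ND-vector is $W_n=-K\bar\mu+G\bar v$, $\bar W_n=W_n/\|W_n\|$; $C$ is a $W_n$-helix if there are a constant unit vector $\bar l_n$ (axis) and a constant $\varphi$ with $\langle\bar W_n,\bar l_n\rangle=\cos\varphi$ along $C$.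
   Formalization: The derivative of $\bar W_n$ with respect to s is nonzero at every point of C, and the one choice of sign is a single sign for the whole curve. Apart from conventions, each condition added here is assumed in the paper as well or is needed for the statement above to hold. *)

theory Defs
  imports "HOL-Analysis.Analysis"
begin

definition smooth_fun_on :: "real set \<Rightarrow> (real \<Rightarrow> real) \<Rightarrow> bool" where
  "smooth_fun_on S f \<longleftrightarrow> (\<forall>n. \<forall>s\<in>S. ((deriv ^^ n) f) differentiable (at s))"

definition myller_config ::
  "real set \<Rightarrow> (real \<Rightarrow> real^3) \<Rightarrow> (real \<Rightarrow> real^3) \<Rightarrow> (real \<Rightarrow> real^3) \<Rightarrow> (real \<Rightarrow> real^3)
   \<Rightarrow> (real \<Rightarrow> real) \<Rightarrow> (real \<Rightarrow> real) \<Rightarrow> (real \<Rightarrow> real) \<Rightarrow> bool" where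
  "myller_config S C xi mu nu G K T \<longleftrightarrow>
     (\<forall>s\<in>S. C differentiable (at s) \<and> norm (vector_derivative C (at s)) = 1) \<and>
     smooth_fun_on S G \<and> smooth_fun_on S K \<and> smooth_fun_on S T \<and>
     (\<forall>s\<in>S. norm (xi s) = 1 \<and> norm (nu s) = 1 \<and> xi s \<bullet> nu s = 0 \<and>
             mu s = cross3 (nu s) (xi s)) \<and>
     (\<forall>s\<in>S. (xi has_vector_derivative (G s *\<^sub>R mu s + K s *\<^sub>R nu s)) (at s)) \<and>
     (\<forall>s\<in>S. (mu has_vector_derivative (- G s *\<^sub>R xi s + T s *\<^sub>R nu s)) (at s)) \<and>
     (\<forall>s\<in>S. (nu has_vector_derivative (- K s *\<^sub>R xi s - T s *\<^sub>R mu s)) (at s))"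

definition Wn :: "(real \<Rightarrow> real^3) \<Rightarrow> (real \<Rightarrow> real^3) \<Rightarrow> (real \<Rightarrow> real) \<Rightarrow> (real \<Rightarrow> real) \<Rightarrow> real \<Rightarrow> real^3" where
  "Wn mu nu G K s = - K s *\<^sub>R mu s + G s *\<^sub>R nu s"

definition Wn_bar :: "(real \<Rightarrow> real^3) \<Rightarrow> (real \<Rightarrow> real^3) \<Rightarrow> (real \<Rightarrow> real) \<Rightarrow> (real \<Rightarrow> real) \<Rightarrow> real \<Rightarrow> real^3" where
  "Wn_bar mu nu G K s = (1 / norm (Wn mu nu G K s)) *\<^sub>R Wn mu nu G K s"

definition Wn_helix_axis ::
  "real set \<Rightarrow> (real \<Rightarrow> real^3) \<Rightarrow> (real \<Rightarrow> real^3) \<Rightarrow> (real \<Rightarrow> real) \<Rightarrow> (real \<Rightarrow> real) \<Rightarrow> real^3 \<Rightarrow> real \<Rightarrow> bool" where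
  "Wn_helix_axis S mu nu G K l phi \<longleftrightarrow>
     norm l = 1 \<and> (\<forall>s\<in>S. Wn_bar mu nu G K s \<bullet> l = cos phi)"

end

theory Submission
  imports Defs
begin

lemma frame_expand:
  fixes x y v :: "real^3"
  assumes "norm x = 1" "norm y = 1" "x \<bullet> y = 0"
  shows "v = (v \<bullet> x) *\<^sub>R x + (v \<bullet> cross3 y x) *\<^sub>R cross3 y x + (v \<bullet> y) *\<^sub>R y"
proof -
  let ?z = "cross3 y x"
  have nz: "norm ?z = 1" using norm_cross_dot[of y x] assms
    by (simp add: inner_commute) (metis abs_norm_cancel norm_ge_zero power2_eq_1_iff real_sqrt_abs real_sqrt_one)
  have xx: "x \<bullet> x = 1" "y \<bullet> y = 1" "?z \<bullet> ?z = 1" using assms nz by (simp_all add: norm_eq_1)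
  have o: "x \<bullet> ?z = 0" "y \<bullet> ?z = 0" "?z \<bullet> x = 0" "?z \<bullet> y = 0" "y \<bullet> x = 0"
    using dot_cross_self[of y x] assms(3) by (simp_all add: inner_commute)
  have ne: "x \<noteq> y" "x \<noteq> ?z" "y \<noteq> ?z" "x \<noteq> 0" "y \<noteq> 0" "?z \<noteq> 0" using xx o by auto
  have ind: "independent {x, y, ?z}"
    apply (rule pairwise_orthogonal_independent)
    using o ne assms(3) by (auto simp: pairwise_def orthogonal_def)
  have c: "card {x, y, ?z} = 3" using ne by auto
  have sp: "UNIV \<subseteq> span {x, y, ?z}"
    by (rule card_ge_dim_independent) (use ind c in auto)
  define w where "w = v - ((v \<bullet> x) *\<^sub>R x + (v \<bullet> ?z) *\<^sub>R ?z + (v \<bullet> y) *\<^sub>R y)"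
  have "orthogonal w b" if "b \<in> {x, y, ?z}" for b
    using that xx o unfolding w_def orthogonal_def
    by (auto simp: inner_diff_right inner_add_right inner_commute)
  then have "orthogonal w w" using sp by (meson orthogonal_to_span UNIV_I subsetD)
  then have "w = 0" by (simp add: orthogonal_def)
  then show ?thesis by (simp add: w_def)
qed

lemma const_vderiv_zero:
  fixes f :: "real \<Rightarrow> real"
  assumes "(f has_vector_derivative D) (at s)" "open S" "s \<in> S" "\<And>t. t \<in> S \<Longrightarrow> f t = c"
  shows "D = 0"
proof -
  have "((\<lambda>t. c) has_vector_derivative 0) (at s)" by (rule has_vector_derivative_const)
  then have "(f has_vector_derivative 0) (at s)"
    by (rule has_vector_derivative_transform_within_open[OF _ assms(2,3)]) (simp add: assms(4))
  then show ?thesis using assms(1) vector_derivative_unique_at by blast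
qed

theorem corollary15:
  fixes a b :: real and C xi mu nu :: "real \<Rightarrow> real^3" and G K T :: "real \<Rightarrow> real"
    and l :: "real^3" and phi :: real
  assumes "a < b"
    and "myller_config {a<..<b} C xi mu nu G K T"
    and "\<forall>s\<in>{a<..<b}. (G s, K s) \<noteq> (0, 0)"
    and "Wn_helix_axis {a<..<b} mu nu G K l phi"
    and "\<forall>s\<in>{a<..<b}. vector_derivative (Wn_bar mu nu G K) (at s) \<noteq> 0"
  shows "\<exists>e\<in>{1, -1::real}. \<forall>s\<in>{a<..<b}.
           l = (- e * sin phi) *\<^sub>R xi s
               + cos phi *\<^sub>R ((- K s / sqrt ((G s)\<^sup>2 + (K s)\<^sup>2)) *\<^sub>R mu s
                              + (G s / sqrt ((G s)\<^sup>2 + (K s)\<^sup>2)) *\<^sub>R nu s)"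
proof -
  define S where "S = {a<..<b}"
  define u where "u = Wn_bar mu nu G K"
  define r where "r = (\<lambda>s. sqrt ((G s)\<^sup>2 + (K s)\<^sup>2))"
  have oS: "open S" by (simp add: S_def)
  note M = assms(2)[unfolded myller_config_def, folded S_def]
  have smG: "smooth_fun_on S G" and smK: "smooth_fun_on S K" using M by auto
  have Gd: "G differentiable (at s)" if "s \<in> S" for s
    using smG that unfolding smooth_fun_on_def by (metis funpow_0)
  have Kd: "K differentiable (at s)" if "s \<in> S" for s
    using smK that unfolding smooth_fun_on_def by (metis funpow_0)
  have fr: "norm (xi s) = 1" "norm (nu s) = 1" "xi s \<bullet> nu s = 0" "mu s = cross3 (nu s) (xi s)"
    if "s \<in> S" for s using M that by auto
  have dxi: "(xi has_vector_derivative (G s *\<^sub>R mu s + K s *\<^sub>R nu s)) (at s)" if "s \<in> S" for s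
    using M that by auto
  have dmu: "(mu has_vector_derivative (- G s *\<^sub>R xi s + T s *\<^sub>R nu s)) (at s)" if "s \<in> S" for s
    using M that by auto
  have dnu: "(nu has_vector_derivative (- K s *\<^sub>R xi s - T s *\<^sub>R mu s)) (at s)" if "s \<in> S" for s
    using M that by auto
  have ip: "xi s \<bullet> xi s = 1" "nu s \<bullet> nu s = 1" "mu s \<bullet> mu s = 1" "xi s \<bullet> nu s = 0"
    "nu s \<bullet> xi s = 0" "mu s \<bullet> xi s = 0" "xi s \<bullet> mu s = 0" "mu s \<bullet> nu s = 0" "nu s \<bullet> mu s = 0"
    if "s \<in> S" for s
  proof -
    have n: "norm (cross3 (nu s) (xi s)) = 1" using norm_cross_dot[of "nu s" "xi s"] fr[OF that]
      by (simp add: inner_commute) (metis abs_norm_cancel norm_ge_zero power2_eq_1_iff real_sqrt_abs real_sqrt_one)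
    show "xi s \<bullet> xi s = 1" "nu s \<bullet> nu s = 1" "mu s \<bullet> mu s = 1" "xi s \<bullet> nu s = 0"
    "nu s \<bullet> xi s = 0" "mu s \<bullet> xi s = 0" "xi s \<bullet> mu s = 0" "mu s \<bullet> nu s = 0" "nu s \<bullet> mu s = 0"
      using fr[OF that] n dot_cross_self[of "nu s" "xi s"] by (simp_all add: norm_eq_1 inner_commute)
  qed
  have rpos: "r s > 0" if "s \<in> S" for s
    using assms(3) that unfolding S_def r_def
    by (simp add: sum_power2_gt_zero_iff)
  have nW: "norm (Wn mu nu G K s) = r s" if "s \<in> S" for s
  proof -
    have "(norm (Wn mu nu G K s))\<^sup>2 = (G s)\<^sup>2 + (K s)\<^sup>2"
      using ip[OF that] unfolding Wn_def power2_norm_eq_inner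
      by (simp add: inner_diff_left inner_diff_right inner_add_left inner_add_right power2_eq_square algebra_simps)
    then show ?thesis unfolding r_def by (metis norm_ge_zero real_sqrt_unique)
  qed
  have uform: "u s = (- K s / r s) *\<^sub>R mu s + (G s / r s) *\<^sub>R nu s" if "s \<in> S" for s
    unfolding u_def Wn_bar_def nW[OF that] unfolding Wn_def by (simp add: algebra_simps)
  have ud: "u differentiable (at s)" if "s \<in> S" for s
  proof -
    have Wd: "Wn mu nu G K differentiable (at s)"
      unfolding Wn_def[abs_def]
      using Gd[OF that] Kd[OF that] differentiableI_vector[OF dmu[OF that]] differentiableI_vector[OF dnu[OF that]]
      by (intro derivative_intros) auto
    have nz: "Wn mu nu G K s \<noteq> 0" using nW[OF that] rpos[OF that] by auto
    have "(\<lambda>t. norm (Wn mu nu G K t)) differentiable (at s)"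
      by (rule differentiable_compose[OF differentiable_norm_at[OF nz] Wd])
    then show ?thesis unfolding u_def Wn_bar_def[abs_def]
      using Wd nz by (intro derivative_intros) auto
  qed
  define D where "D = (\<lambda>s. vector_derivative u (at s))"
  have du: "(u has_vector_derivative D s) (at s)" if "s \<in> S" for s
    using ud[OF that] unfolding D_def by (simp add: vector_derivative_works)
  have Dnz: "D s \<noteq> 0" if "s \<in> S" for s using assms(5) that unfolding D_def u_def S_def by auto
  have ul: "u s \<bullet> l = cos phi" if "s \<in> S" for s using assms(4) that unfolding Wn_helix_axis_def u_def S_def by auto
  have nl: "norm l = 1" using assms(4) unfolding Wn_helix_axis_def by auto
  have uu: "u s \<bullet> u s = 1" if "s \<in> S" for s
  proof -
    have "u s \<bullet> u s = (K s / r s)\<^sup>2 + (G s / r s)\<^sup>2"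
      using uform[OF that] ip[OF that] by (simp add: inner_diff_left inner_diff_right inner_add_left inner_add_right power2_eq_square)
    also have "\<dots> = ((G s)\<^sup>2 + (K s)\<^sup>2) / (r s)\<^sup>2" by (simp add: power_divide add_divide_distrib)
    also have "(r s)\<^sup>2 = (G s)\<^sup>2 + (K s)\<^sup>2" unfolding r_def by simp
    finally show ?thesis using assms(3) that unfolding r_def S_def by auto
  qed
  have uxi: "u s \<bullet> xi s = 0" if "s \<in> S" for s
    using uform[OF that] ip[OF that] by (simp add: inner_diff_left inner_diff_right inner_add_left)
  have key: "D s \<bullet> l = 0 \<and> D s \<bullet> u s = 0 \<and> D s \<bullet> xi s = 0" if "s \<in> S" for s
  proof (intro conjI)
    have "((\<lambda>t. u t \<bullet> l) has_vector_derivative (u s \<bullet> 0 + D s \<bullet> l)) (at s)"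
      by (rule bounded_bilinear.has_vector_derivative[OF bounded_bilinear_inner du[OF that]])
         (rule has_vector_derivative_const)
    then show "D s \<bullet> l = 0" using const_vderiv_zero[OF _ oS that, of _ _ "cos phi"] ul by auto
    have "((\<lambda>t. u t \<bullet> u t) has_vector_derivative (u s \<bullet> D s + D s \<bullet> u s)) (at s)"
      by (rule bounded_bilinear.has_vector_derivative[OF bounded_bilinear_inner du[OF that] du[OF that]])
    then have "u s \<bullet> D s + D s \<bullet> u s = 0" using const_vderiv_zero[OF _ oS that, of _ _ 1] uu by auto
    then show "D s \<bullet> u s = 0" by (simp add: inner_commute)
    have "((\<lambda>t. u t \<bullet> xi t) has_vector_derivative (u s \<bullet> (G s *\<^sub>R mu s + K s *\<^sub>R nu s) + D s \<bullet> xi s)) (at s)"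
      by (rule bounded_bilinear.has_vector_derivative[OF bounded_bilinear_inner du[OF that] dxi[OF that]])
    then have "u s \<bullet> (G s *\<^sub>R mu s + K s *\<^sub>R nu s) + D s \<bullet> xi s = 0"
      using const_vderiv_zero[OF _ oS that, of _ _ 0] uxi by auto
    moreover have "u s \<bullet> (G s *\<^sub>R mu s + K s *\<^sub>R nu s) = 0"
      unfolding uform[OF that] using ip[OF that] by (simp add: inner_add_left inner_add_right inner_diff_left inner_diff_right field_simps)
    ultimately show "D s \<bullet> xi s = 0" by simp
  qed
  define x where "x = (\<lambda>s. l \<bullet> xi s)"
  have point: "l = x s *\<^sub>R xi s + cos phi *\<^sub>R ((- K s / r s) *\<^sub>R mu s + (G s / r s) *\<^sub>R nu s)
     \<and> (x s)\<^sup>2 = (sin phi)\<^sup>2" if "s \<in> S" for s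
  proof -
    define p where "p = l \<bullet> mu s"
    define q where "q = l \<bullet> nu s"
    define g where "g = G s / r s"
    define k where "k = K s / r s"
    define \<alpha> where "\<alpha> = D s \<bullet> mu s"
    define \<beta> where "\<beta> = D s \<bullet> nu s"
    have gk: "g\<^sup>2 + k\<^sup>2 = 1" using rpos[OF that] assms(3) that unfolding g_def k_def r_def S_def
      by (auto simp: power_divide add_divide_distrib[symmetric])
    have el: "l = x s *\<^sub>R xi s + p *\<^sub>R mu s + q *\<^sub>R nu s"
      using frame_expand[OF fr(1,2,3)[OF that], of l] fr(4)[OF that] unfolding x_def p_def q_def by simp
    have eD: "D s = \<alpha> *\<^sub>R mu s + \<beta> *\<^sub>R nu s"
      using frame_expand[OF fr(1,2,3)[OF that], of "D s"] fr(4)[OF that] key[OF that] unfolding \<alpha>_def \<beta>_def by simp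
    have ab: "\<alpha> \<noteq> 0 \<or> \<beta> \<noteq> 0" using Dnz[OF that] eD by auto
    have uf: "u s = (-k) *\<^sub>R mu s + g *\<^sub>R nu s" using uform[OF that] unfolding g_def k_def by simp
    have pc: "mu s \<bullet> l = p" "nu s \<bullet> l = q" by (simp_all add: p_def q_def inner_commute)
    have "0 = D s \<bullet> l" using key[OF that] by simp
    also have "\<dots> = (\<alpha> *\<^sub>R mu s + \<beta> *\<^sub>R nu s) \<bullet> l" using eD by simp
    also have "\<dots> = \<alpha> * p + \<beta> * q" by (simp add: inner_add_left pc)
    finally have e1: "\<alpha> * p + \<beta> * q = 0" by simp
    have "0 = D s \<bullet> u s" using key[OF that] by simp
    also have "\<dots> = - k * \<alpha> + g * \<beta>" unfolding uf \<alpha>_def \<beta>_def by (simp add: inner_add_right inner_diff_right)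
    finally have e2: "- k * \<alpha> + g * \<beta> = 0" by simp
    have "cos phi = u s \<bullet> l" using ul[OF that] by simp
    also have "\<dots> = - k * p + g * q" unfolding uf by (simp add: inner_add_left inner_diff_left pc)
    finally have e3: "- k * p + g * q = cos phi" by simp
    have a1: "\<alpha> * (g * p + k * q) = g * (\<alpha> * p + \<beta> * q) + q * (k * \<alpha> - g * \<beta>)"
      by (simp add: algebra_simps)
    have a2: "\<beta> * (g * p + k * q) = k * (\<alpha> * p + \<beta> * q) + p * (g * \<beta> - k * \<alpha>)"
      by (simp add: algebra_simps)
    have "\<alpha> * (g * p + k * q) = 0" "\<beta> * (g * p + k * q) = 0"
      using a1 a2 e1 e2 by simp_all
    then have e4: "g * p + k * q = 0" using ab by auto
    have b1: "g * (g * p + k * q) - k * (- k * p + g * q) = p * (g\<^sup>2 + k\<^sup>2)"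
      by (simp add: algebra_simps power2_eq_square)
    have b2: "k * (g * p + k * q) + g * (- k * p + g * q) = q * (g\<^sup>2 + k\<^sup>2)"
      by (simp add: algebra_simps power2_eq_square)
    have pv: "p = - k * cos phi" using b1 e3 e4 gk by simp
    have qv: "q = g * cos phi" using b2 e3 e4 gk by simp
    have "1 = l \<bullet> l" using nl by (simp add: norm_eq_1)
    also have "\<dots> = (x s)\<^sup>2 + p\<^sup>2 + q\<^sup>2"
      using ip[OF that] by (subst (1 2) el) (simp add: inner_diff_left inner_diff_right inner_add_left inner_add_right power2_eq_square)
    also have "\<dots> = (x s)\<^sup>2 + (cos phi)\<^sup>2 * (g\<^sup>2 + k\<^sup>2)" by (simp add: pv qv power2_eq_square algebra_simps)
    finally have "(x s)\<^sup>2 = (sin phi)\<^sup>2" using gk sin_cos_squared_add[of phi] by (simp only: gk mult_1_right)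
    moreover have "l = x s *\<^sub>R xi s + cos phi *\<^sub>R ((- K s / r s) *\<^sub>R mu s + (G s / r s) *\<^sub>R nu s)"
      using el pv qv unfolding g_def k_def by (simp add: algebra_simps)
    ultimately show ?thesis by simp
  qed
  have xcont: "continuous_on S x"
    unfolding x_def
    by (intro continuous_at_imp_continuous_on ballI continuous_intros)
       (metis differentiable_imp_continuous_within differentiableI_vector dxi)
  have conn: "connected (x ` S)"
    by (rule connected_continuous_image[OF xcont]) (simp add: S_def)
  obtain s0 where s0: "s0 \<in> S" using assms(1) unfolding S_def
    by (metis dense greaterThanLessThan_iff)
  show ?thesis
  proof (cases "sin phi = 0")
    case True
    then have "x s = 0" if "s \<in> S" for s using point[OF that] by simp
    then show ?thesis using point unfolding S_def r_def using True by (intro bexI[of _ 1]) auto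
  next
    case False
    define e where "e = - x s0 / sin phi"
    have xs0: "x s0 = - e * sin phi" using False unfolding e_def by simp
    have e: "e \<in> {1, -1}"
    proof -
      have "e\<^sup>2 = 1" using point[OF s0] False unfolding e_def by (simp add: power_divide)
      then show ?thesis by (simp add: power2_eq_1_iff)
    qed
    have xs: "x s = - e * sin phi" if "s \<in> S" for s
    proof (rule ccontr)
      assume ne: "x s \<noteq> - e * sin phi"
      have "(x s)\<^sup>2 = (x s0)\<^sup>2" using point[OF that] point[OF s0] by simp
      then have neg: "x s = - x s0" using ne xs0 by (simp add: power2_eq_iff)
      have "0 \<in> x ` S"
      proof (cases "x s0 \<le> 0")
        case True
        then show ?thesis using conn[unfolded connected_iff_interval] s0 that neg
          by (metis imageI neg_0_le_iff_le)
      next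
        case f: False
        then show ?thesis using conn[unfolded connected_iff_interval] s0 that neg
          by (metis imageI neg_le_0_iff_le linorder_not_le order_less_imp_le)
      qed
      then obtain t where "t \<in> S" "x t = 0" by auto
      then show False using point[of t] False by simp
    qed
    show ?thesis
      using e point xs unfolding S_def r_def by (intro bexI[of _ e]) auto
  qed
qed

end
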